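(* Let $D$ be an oriented graph whose missing graph is a vertex-disjoint union of paths, and let $\Delta$ be its dependency digraph. Let $abc$ and $xyz$ be two distinct connected components of the missing graph, each a path with edges $ab,bc$ and $xy,yz$ respectively, such that $d^+_\Delta(ab)=d^+_\Delta(bc)=2$ and $d^-_\Delta(xy)=d^-_\Delta(yz)=2$. If $ab$ loses to $xy$, then $ab$ loses to $yz$, $bc$ loses to $xy$, and $bc$ loses to $yz$.
   Context: All digraphs are finite oriented graphs. $N^+(v)$ is the out-neighborhood; $N^{++}(v)$ is the set of vertices $w\notin N^+(v)\cup\{v\}$ with $u\to w$ for some $u\in N^+(v)$. A missing edge is a pair of distinct non-adjacent vertices; the missing graph is formed by the missing edges. For missing edges $\{x,y\},\{a,b\}$, $\{x,y\}$ loses to $\{a,b\}$ if the endpoints can be labelled so that $x\to a$, $b\notin N^+(x)\cup N^{++}(x)$, $y\to b$, $a\notin N^+(y)\cup N^{++}(y)$. The dependency digraph $\Delta$ has the missing edges as vertices and arcs $(e,e')$ whenever $e$ loses to $e'$. *)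

theory Defs
  imports Main
begin

definition oriented_graph :: "'a set \<Rightarrow> ('a \<times> 'a) set \<Rightarrow> bool" where
  "oriented_graph V A \<longleftrightarrow> finite V \<and> A \<subseteq> V \<times> V \<and>
     (\<forall>x. (x, x) \<notin> A) \<and> (\<forall>x y. (x, y) \<in> A \<longrightarrow> (y, x) \<notin> A)"

definition out_nbhd :: "('a \<times> 'a) set \<Rightarrow> 'a \<Rightarrow> 'a set" where
  "out_nbhd A v = {w. (v, w) \<in> A}"

definition second_out_nbhd :: "('a \<times> 'a) set \<Rightarrow> 'a \<Rightarrow> 'a set" where
  "second_out_nbhd A v =
     {w. w \<notin> out_nbhd A v \<and> w \<noteq> v \<and> (\<exists>u \<in> out_nbhd A v. (u, w) \<in> A)}"

definition missing_edge :: "'a set \<Rightarrow> ('a \<times> 'a) set \<Rightarrow> 'a set \<Rightarrow> bool" where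
  "missing_edge V A e \<longleftrightarrow> (\<exists>x y. e = {x, y} \<and> x \<in> V \<and> y \<in> V \<and> x \<noteq> y \<and>
      (x, y) \<notin> A \<and> (y, x) \<notin> A)"

definition missing_nbrs :: "'a set \<Rightarrow> ('a \<times> 'a) set \<Rightarrow> 'a \<Rightarrow> 'a set" where
  "missing_nbrs V A v = {w. missing_edge V A {v, w}}"

definition missing_cycle :: "'a set \<Rightarrow> ('a \<times> 'a) set \<Rightarrow> 'a list \<Rightarrow> bool" where
  "missing_cycle V A vs \<longleftrightarrow> length vs \<ge> 3 \<and> distinct vs \<and>
     (\<forall>i < length vs - 1. missing_edge V A {vs ! i, vs ! Suc i}) \<and>
     missing_edge V A {last vs, hd vs}"

definition missing_graph_union_of_paths :: "'a set \<Rightarrow> ('a \<times> 'a) set \<Rightarrow> bool" where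
  "missing_graph_union_of_paths V A \<longleftrightarrow>
     (\<forall>v \<in> V. card (missing_nbrs V A v) \<le> 2) \<and> (\<forall>vs. \<not> missing_cycle V A vs)"

definition loses_to :: "'a set \<Rightarrow> ('a \<times> 'a) set \<Rightarrow> 'a set \<Rightarrow> 'a set \<Rightarrow> bool" where
  "loses_to V A e f \<longleftrightarrow> missing_edge V A e \<and> missing_edge V A f \<and>
     (\<exists>x y a b. e = {x, y} \<and> f = {a, b} \<and>
        (x, a) \<in> A \<and> b \<notin> out_nbhd A x \<union> second_out_nbhd A x \<and>
        (y, b) \<in> A \<and> a \<notin> out_nbhd A y \<union> second_out_nbhd A y)"

text \<open>Degrees in the dependency digraph Delta (vertices: missing edges, arcs: loses_to).\<close>
definition dep_outdeg :: "'a set \<Rightarrow> ('a \<times> 'a) set \<Rightarrow> 'a set \<Rightarrow> nat" where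
  "dep_outdeg V A e = card {f. loses_to V A e f}"

definition dep_indeg :: "'a set \<Rightarrow> ('a \<times> 'a) set \<Rightarrow> 'a set \<Rightarrow> nat" where
  "dep_indeg V A e = card {f. loses_to V A f e}"

definition path3_component :: "'a set \<Rightarrow> ('a \<times> 'a) set \<Rightarrow> 'a \<Rightarrow> 'a \<Rightarrow> 'a \<Rightarrow> bool" where
  "path3_component V A a b c \<longleftrightarrow> a \<noteq> b \<and> b \<noteq> c \<and> a \<noteq> c \<and>
     missing_nbrs V A a = {b} \<and> missing_nbrs V A b = {a, c} \<and> missing_nbrs V A c = {b}"

end

theory Submission
  imports Defs
begin

lemma notin2: "t \<notin> out_nbhd A s \<union> second_out_nbhd A s \<longleftrightarrow>
   (s,t) \<notin> A \<and> (t = s \<or> (\<forall>w. (s,w) \<in> A \<longrightarrow> (w,t) \<notin> A))"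
  unfolding out_nbhd_def second_out_nbhd_def by auto

lemma me: "missing_edge V A {u,v} \<Longrightarrow> u \<noteq> v \<and> (u,v) \<notin> A \<and> (v,u) \<notin> A \<and> u \<in> V \<and> v \<in> V"
  unfolding missing_edge_def by (auto simp: doubleton_eq_iff)

lemma unf:
  assumes "loses_to V A e f"
  obtains u v p q where "e = {u,v}" "f = {p,q}" "(u,p) \<in> A" "(v,q) \<in> A"
    "(u,q) \<notin> A" "q = u \<or> (\<forall>w. (u,w) \<in> A \<longrightarrow> (w,q) \<notin> A)"
    "(v,p) \<notin> A" "p = v \<or> (\<forall>w. (v,w) \<in> A \<longrightarrow> (w,p) \<notin> A)"
    "u \<noteq> v" "(u,v) \<notin> A" "(v,u) \<notin> A" "p \<noteq> q" "(p,q) \<notin> A" "(q,p) \<notin> A"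
proof -
  from assms obtain u v p q where h: "missing_edge V A e" "missing_edge V A f" "e = {u,v}" "f = {p,q}"
    "(u,p) \<in> A" "q \<notin> out_nbhd A u \<union> second_out_nbhd A u"
    "(v,q) \<in> A" "p \<notin> out_nbhd A v \<union> second_out_nbhd A v"
    unfolding loses_to_def by blast
  from h me[of V A u v] me[of V A p q] show ?thesis using that unfolding notin2 by blast
qed

lemma lem1:
  assumes og: "oriented_graph V A" and "loses_to V A e f" "loses_to V A e g"
    and adj: "\<forall>s\<in>f. \<forall>t\<in>g. (s,t) \<in> A \<or> (t,s) \<in> A"
  shows False
proof -
  have irr: "\<And>x. (x,x) \<notin> A" and as: "\<And>x y. (x,y) \<in> A \<Longrightarrow> (y,x) \<notin> A"
    using og unfolding oriented_graph_def by auto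
  obtain u v p q where 1: "e = {u,v}" "f = {p,q}" "(u,p) \<in> A" "(v,q) \<in> A"
    "(u,q) \<notin> A" "q = u \<or> (\<forall>w. (u,w) \<in> A \<longrightarrow> (w,q) \<notin> A)"
    "(v,p) \<notin> A" "p = v \<or> (\<forall>w. (v,w) \<in> A \<longrightarrow> (w,p) \<notin> A)"
    "u \<noteq> v" "(u,v) \<notin> A" "(v,u) \<notin> A" "p \<noteq> q"
    using unf[OF assms(2)] by metis
  obtain u' v' p' q' where 2: "e = {u',v'}" "g = {p',q'}" "(u',p') \<in> A" "(v',q') \<in> A"
    "(u',q') \<notin> A" "q' = u' \<or> (\<forall>w. (u',w) \<in> A \<longrightarrow> (w,q') \<notin> A)"
    "(v',p') \<notin> A" "p' = v' \<or> (\<forall>w. (v',w) \<in> A \<longrightarrow> (w,p') \<notin> A)"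
    using unf[OF assms(3)] by metis
  have a: "(p,p') \<in> A \<or> (p',p) \<in> A" "(p,q') \<in> A \<or> (q',p) \<in> A"
      "(q,p') \<in> A \<or> (p',q) \<in> A" "(q,q') \<in> A \<or> (q',q) \<in> A"
    using adj 1 2 by auto
  from 1(1) 2(1) 1(9) have "(u' = u \<and> v' = v) \<or> (u' = v \<and> v' = u)" by (auto simp: doubleton_eq_iff)
  then show False
  proof
    assume c: "u' = u \<and> v' = v"
    show False using 1 2 a c irr as by metis
  next
    assume c: "u' = v \<and> v' = u"
    show False using 1 2 a c irr as by metis
  qed
qed

lemma lem2:
  assumes og: "oriented_graph V A" and "loses_to V A e f" "loses_to V A g f"
    and adj: "\<forall>s\<in>e. \<forall>t\<in>g. (s,t) \<in> A \<or> (t,s) \<in> A"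
  shows False
proof -
  have irr: "\<And>x. (x,x) \<notin> A" and as: "\<And>x y. (x,y) \<in> A \<Longrightarrow> (y,x) \<notin> A"
    using og unfolding oriented_graph_def by auto
  obtain u v p q where 1: "e = {u,v}" "f = {p,q}" "(u,p) \<in> A" "(v,q) \<in> A"
    "(u,q) \<notin> A" "q = u \<or> (\<forall>w. (u,w) \<in> A \<longrightarrow> (w,q) \<notin> A)"
    "(v,p) \<notin> A" "p = v \<or> (\<forall>w. (v,w) \<in> A \<longrightarrow> (w,p) \<notin> A)"
    "u \<noteq> v" "(u,v) \<notin> A" "(v,u) \<notin> A" "p \<noteq> q"
    using unf[OF assms(2)] by metis
  obtain u' v' p' q' where 2: "g = {u',v'}" "f = {p',q'}" "(u',p') \<in> A" "(v',q') \<in> A"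
    "(u',q') \<notin> A" "q' = u' \<or> (\<forall>w. (u',w) \<in> A \<longrightarrow> (w,q') \<notin> A)"
    "(v',p') \<notin> A" "p' = v' \<or> (\<forall>w. (v',w) \<in> A \<longrightarrow> (w,p') \<notin> A)"
    "u' \<noteq> v'" "(u',v') \<notin> A" "(v',u') \<notin> A"
    using unf[OF assms(3)] by metis
  have a: "(u,u') \<in> A \<or> (u',u) \<in> A" "(u,v') \<in> A \<or> (v',u) \<in> A"
      "(v,u') \<in> A \<or> (u',v) \<in> A" "(v,v') \<in> A \<or> (v',v) \<in> A"
    using adj 1 2 by auto
  from 1(2) 2(2) 1(12) have "(p' = p \<and> q' = q) \<or> (p' = q \<and> q' = p)" by (auto simp: doubleton_eq_iff)
  then show False
  proof
    assume c: "p' = p \<and> q' = q"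
    show False using 1 2 a c irr as by metis
  next
    assume c: "p' = q \<and> q' = p"
    show False using 1 2 a c irr as by metis
  qed
qed

lemma adjI: "s \<in> V \<Longrightarrow> t \<in> V \<Longrightarrow> s \<noteq> t \<Longrightarrow> \<not> missing_edge V A {s,t} \<Longrightarrow> (s,t) \<in> A \<or> (t,s) \<in> A"
  unfolding missing_edge_def by blast

lemma comp:
  assumes "path3_component V A a b c" "missing_edge V A {s,t}" "s \<in> {a,b,c}"
  shows "t \<in> {a,b,c} \<and> ({s,t} = {a,b} \<or> {s,t} = {b,c})"
proof -
  have "t \<in> missing_nbrs V A s" using assms(2) unfolding missing_nbrs_def by simp
  then show ?thesis using assms(1,3) unfolding path3_component_def by auto
qed

lemma compV:
  assumes "path3_component V A a b c"
  shows "a \<in> V" "b \<in> V" "c \<in> V" "missing_edge V A {a,b}" "missing_edge V A {b,c}"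
proof -
  have "b \<in> missing_nbrs V A a" "c \<in> missing_nbrs V A b" using assms unfolding path3_component_def by auto
  then have m: "missing_edge V A {a,b}" "missing_edge V A {b,c}" unfolding missing_nbrs_def by auto
  then show "missing_edge V A {a,b}" "missing_edge V A {b,c}" by auto
  show "a \<in> V" "b \<in> V" "c \<in> V" using me[OF m(1)] me[OF m(2)] by auto
qed

lemma other:
  assumes "path3_component V A a b c" "missing_edge V A g" "g \<noteq> {a,b}" "g \<noteq> {b,c}"
  shows "\<forall>r\<in>{a,b}. \<forall>t\<in>g. (r,t) \<in> A \<or> (t,r) \<in> A"
proof -
  obtain s t where g: "g = {s,t}" "s \<in> V" "t \<in> V" "s \<noteq> t"
    using assms(2) unfolding missing_edge_def by blast
  have ms: "missing_edge V A {s,t}" "missing_edge V A {t,s}" using assms(2) g(1) by (auto simp: insert_commute)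
  have st: "s \<notin> {a,b,c}" "t \<notin> {a,b,c}"
    using comp[OF assms(1) ms(1)] comp[OF assms(1) ms(2)] assms(3,4) g(1) by (auto simp: insert_commute)
  have V: "a \<in> V" "b \<in> V" using compV[OF assms(1)] by auto
  show ?thesis
  proof (intro ballI)
    fix r w assume r: "r \<in> {a,b}" and w: "w \<in> g"
    have "\<not> missing_edge V A {r,w}"
      using comp[OF assms(1), of r w] r w g(1) st by auto
    then show "(r,w) \<in> A \<or> (w,r) \<in> A"
      using adjI[of r V w A] r w g st V by auto
  qed
qed

lemma card2:
  assumes "card S = 2" "e \<in> S"
  obtains f where "f \<in> S" "f \<noteq> e"
proof -
  have "\<not> S \<subseteq> {e}"
  proof
    assume "S \<subseteq> {e}" then have "card S \<le> 1" using card_mono[of "{e}" S] by simp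
    then show False using assms(1) by simp
  qed
  then show ?thesis using that by blast
qed

lemma loses_me: "loses_to V A e f \<Longrightarrow> missing_edge V A e \<and> missing_edge V A f"
  unfolding loses_to_def by blast

theorem lemma4p3:
  fixes V :: "'a set" and A :: "('a \<times> 'a) set" and a b c x y z :: 'a
  assumes "oriented_graph V A"
    and "missing_graph_union_of_paths V A"
    and "path3_component V A a b c"
    and "path3_component V A x y z"
    and "{a, b, c} \<noteq> {x, y, z}"
    and "dep_outdeg V A {a, b} = 2" and "dep_outdeg V A {b, c} = 2"
    and "dep_indeg V A {x, y} = 2" and "dep_indeg V A {y, z} = 2"
    and "loses_to V A {a, b} {x, y}"
  shows "loses_to V A {a, b} {y, z} \<and> loses_to V A {b, c} {x, y} \<and> loses_to V A {b, c} {y, z}"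
proof -
  have xz: "x \<noteq> z" "a \<noteq> c" using assms(3,4) unfolding path3_component_def by auto
  have ne1: "{x,y} \<noteq> {y,z}" using xz by (auto simp: doubleton_eq_iff)
  have ne2: "{a,b} \<noteq> {b,c}" using xz by (auto simp: doubleton_eq_iff)
  have r1: "loses_to V A {a, b} {y, z}"
  proof -
    obtain f where f: "loses_to V A {a,b} f" "f \<noteq> {x,y}"
      using card2[of "{f. loses_to V A {a,b} f}" "{x,y}"] assms(6,10) unfolding dep_outdeg_def by auto
    show ?thesis
    proof (rule ccontr)
      assume "\<not> ?thesis"
      then have "f \<noteq> {y,z}" using f by auto
      then have "\<forall>r\<in>{x,y}. \<forall>t\<in>f. (r,t) \<in> A \<or> (t,r) \<in> A"
        using other[OF assms(4) _ f(2)] loses_me[OF f(1)] by blast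
      then show False using lem1[OF assms(1) assms(10) f(1)] by blast
    qed
  qed
  have r2: "\<And>f. f = {x,y} \<or> f = {y,z} \<Longrightarrow> dep_indeg V A f = 2 \<Longrightarrow> loses_to V A {a,b} f \<Longrightarrow> loses_to V A {b,c} f"
  proof -
    fix f assume f0: "f = {x,y} \<or> f = {y,z}" "dep_indeg V A f = 2" "loses_to V A {a,b} f"
    obtain g where g: "loses_to V A g f" "g \<noteq> {a,b}"
      using card2[of "{g. loses_to V A g f}" "{a,b}"] f0 unfolding dep_indeg_def by auto
    show "loses_to V A {b,c} f"
    proof (rule ccontr)
      assume "\<not> ?thesis"
      then have "g \<noteq> {b,c}" using g by auto
      then have "\<forall>r\<in>{a,b}. \<forall>t\<in>g. (r,t) \<in> A \<or> (t,r) \<in> A"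
        using other[OF assms(3) _ g(2)] loses_me[OF g(1)] by blast
      then show False using lem2[OF assms(1) f0(3) g(1)] by blast
    qed
  qed
  show ?thesis using r1 r2[of "{x,y}"] r2[of "{y,z}"] assms(8,9,10) by blast
qed

end
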